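(* For $n\ge2$ let $R_n$ be the set of words $\rho$ of length $n$ over the alphabet $\{0,1\}$ such that $\rho$ does not start with $01$, $\rho$ does not end with $10$, and $\rho$ does not contain $101$ as a factor. Then $|R_n|=\Theta(\alpha^n)$, where $\alpha\approx1.755$ is the unique positive root of the polynomial $x^4-x^3-x^2-1$.
   Context: $|R_n|=\Theta(\alpha^n)$ means there exist positive constants $c_1,c_2$ with $c_1\alpha^n\le|R_n|\le c_2\alpha^n$ for all $n\ge2$. *)

theory Defs
  imports Complex_Main "HOL-Library.Sublist"
begin

text \<open>Binary words are lists of booleans; False encodes 0 and True encodes 1.\<close>

definition R :: "nat \<Rightarrow> bool list set" where
  "R n = {\<rho>. length \<rho> = n
             \<and> \<not> prefix [False, True] \<rho>
             \<and> \<not> suffix [True, False] \<rho>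
             \<and> \<not> sublist [True, False, True] \<rho>}"

definition alpha :: real where
  "alpha = (THE x. x > 0 \<and> x ^ 4 - x ^ 3 - x ^ 2 - 1 = 0)"

end

theory Submission
  imports Defs
begin

definition A :: "nat \<Rightarrow> bool list set" where
  "A n = {w. length w = n \<and> \<not> sublist [True, False, True] w}"

lemma finA: "finite (A n)"
proof -
  have "A n \<subseteq> {xs. set xs \<subseteq> UNIV \<and> length xs = n}" unfolding A_def by auto
  moreover have "finite {xs::bool list. set xs \<subseteq> UNIV \<and> length xs = n}"
    by (rule finite_lists_length_eq) simp
  ultimately show ?thesis by (rule finite_subset)
qed

lemma subF: "sublist [True, False, True] (False # w) \<longleftrightarrow> sublist [True, False, True] w"
  by (simp add: sublist_Cons_right)

lemma subT: "sublist [True, False, True] (True # w) \<longleftrightarrow>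
   prefix [False, True] w \<or> sublist [True, False, True] w"
  by (simp add: sublist_Cons_right)

lemma A_Suc: "A (Suc n) = Cons False ` A n \<union> Cons True ` {w \<in> A n. \<not> prefix [False, True] w}"
proof
  show "A (Suc n) \<subseteq> Cons False ` A n \<union> Cons True ` {w \<in> A n. \<not> prefix [False, True] w}"
  proof
    fix v assume v: "v \<in> A (Suc n)"
    then obtain x w where vw: "v = x # w" unfolding A_def by (cases v) auto
    show "v \<in> Cons False ` A n \<union> Cons True ` {w \<in> A n. \<not> prefix [False, True] w}"
      using v unfolding vw A_def by (cases x) (auto simp: subF subT)
  qed
next
  show "Cons False ` A n \<union> Cons True ` {w \<in> A n. \<not> prefix [False, True] w} \<subseteq> A (Suc n)"
    unfolding A_def by (auto simp: subF subT)
qed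

lemma alpha_ex: "\<exists>!x::real. x > 0 \<and> x ^ 4 - x ^ 3 - x ^ 2 - 1 = 0"
proof -
  have fac: "\<And>x::real. x ^ 4 - x ^ 3 - x ^ 2 - 1 = (x + 1) * (x ^ 3 - 2 * x ^ 2 + x - 1)"
    by (simp add: algebra_simps power2_eq_square power3_eq_cube power4_eq_xxxx)
  have "\<exists>x\<ge>1. x \<le> 2 \<and> (\<lambda>x::real. x ^ 4 - x ^ 3 - x ^ 2 - 1) x = 0"
    by (rule IVT) (auto intro!: continuous_intros)
  then obtain x :: real where x: "x \<ge> 1" "x ^ 4 - x ^ 3 - x ^ 2 - 1 = 0" by auto
  have gt1: "y > 1" if "y > 0" "y ^ 4 - y ^ 3 - y ^ 2 - 1 = 0" for y :: real
  proof (rule ccontr)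
    assume "\<not> y > 1"
    hence "y \<le> 1" by simp
    have "(y + 1) * (y ^ 3 - 2 * y ^ 2 + y - 1) = 0" using that fac[of y] by simp
    then have q: "y ^ 3 - 2 * y ^ 2 + y - 1 = 0" using that(1) by (auto simp: mult_eq_0_iff)
    have "y * (1 - y) ^ 2 \<le> 1 * 1"
      using \<open>y \<le> 1\<close> that(1) by (intro mult_mono) (auto simp: power_le_one)
    moreover have "y * (1 - y) ^ 2 = y ^ 3 - 2 * y ^ 2 + y"
      by (simp add: algebra_simps power2_eq_square power3_eq_cube)
    ultimately have "y ^ 3 - 2 * y ^ 2 + y - 1 \<le> 0" by simp
    have "y * (1 - y) ^ 2 < 1"
    proof (cases "y = 1")
      case False
      then have "(1 - y) ^ 2 < 1" using \<open>y \<le> 1\<close> that(1)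
        by (simp add: power2_eq_square) (smt (verit) mult_less_cancel_right2)
      then show ?thesis using \<open>y \<le> 1\<close> that(1)
        by (smt (verit) mult_le_cancel_right1 zero_le_power2 mult_left_le_one_le)
    qed simp
    then show False using q \<open>y * (1 - y) ^ 2 = _\<close> by simp
  qed
  show ?thesis
  proof (rule ex1I[of _ x])
    show "x > 0 \<and> x ^ 4 - x ^ 3 - x ^ 2 - 1 = 0" using x by simp
  next
    fix y :: real assume y: "y > 0 \<and> y ^ 4 - y ^ 3 - y ^ 2 - 1 = 0"
    have x1: "x > 1" using gt1[of x] x by simp
    have y1: "y > 1" using gt1[of y] y by simp
    have qx: "x ^ 3 - 2 * x ^ 2 + x - 1 = 0" using x fac[of x] x1 by simp
    have qy: "y ^ 3 - 2 * y ^ 2 + y - 1 = 0" using y fac[of y] y1 by simp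
    have d: "(y ^ 3 - 2 * y ^ 2 + y - 1) - (x ^ 3 - 2 * x ^ 2 + x - 1)
       = (y - x) * ((x - 1) ^ 2 + (y - 1) ^ 2 + (x * y - 1))"
      by (simp add: algebra_simps power2_eq_square power3_eq_cube)
    have pos: "(x - 1) ^ 2 + (y - 1) ^ 2 + (x * y - 1) > 0"
    proof -
      have "x * y > 1 * 1" using x1 y1 by (intro mult_strict_mono) auto
      then show ?thesis by (smt (verit) zero_le_power2)
    qed
    have "(y - x) * ((x - 1) ^ 2 + (y - 1) ^ 2 + (x * y - 1)) = 0" using d qx qy by simp
    then show "y = x" using pos by simp
  qed
qed

lemma alpha_props: "alpha > 1" "alpha ^ 3 - 2 * alpha ^ 2 + alpha - 1 = 0"
proof -
  have a: "alpha > 0 \<and> alpha ^ 4 - alpha ^ 3 - alpha ^ 2 - 1 = 0"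
    unfolding alpha_def by (rule theI'[OF alpha_ex])
  have fac: "\<And>x::real. x ^ 4 - x ^ 3 - x ^ 2 - 1 = (x + 1) * (x ^ 3 - 2 * x ^ 2 + x - 1)"
    by (simp add: algebra_simps power2_eq_square power3_eq_cube power4_eq_xxxx)
  have "(alpha + 1) * (alpha ^ 3 - 2 * alpha ^ 2 + alpha - 1) = 0" by (metis a fac)
  moreover have "alpha + 1 \<noteq> 0" using a by linarith
  ultimately show q: "alpha ^ 3 - 2 * alpha ^ 2 + alpha - 1 = 0" by simp
  show "alpha > 1"
  proof (rule ccontr)
    assume "\<not> alpha > 1"
    hence le: "alpha \<le> 1" by simp
    have m: "(1 - alpha) ^ 2 \<le> 1" using le a by (auto simp: power_le_one)
    have "alpha * (1 - alpha) ^ 2 \<le> alpha * 1"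
      using m a by (intro mult_left_mono) auto
    moreover have "alpha * (1 - alpha) ^ 2 = alpha ^ 3 - 2 * alpha ^ 2 + alpha"
      by (simp add: algebra_simps power2_eq_square power3_eq_cube)
    ultimately have "1 \<le> alpha" using q by linarith
    then have "alpha = 1" using le by linarith
    then show False using q by simp
  qed
qed

definition wt :: "bool list \<Rightarrow> real" where
  "wt w = (if prefix [False, True] w then 1
           else if w \<noteq> [] \<and> hd w then alpha * (alpha - 1) else alpha)"

lemma wt_bounds: "1 \<le> wt w" "wt w \<le> alpha"
proof -
  have a: "alpha > 1" using alpha_props by simp
  have q: "alpha ^ 3 - 2 * alpha ^ 2 + alpha - 1 = 0" using alpha_props by simp
  define t where "t = alpha * (alpha - 1)"
  have e: "t * (alpha - 1) = 1" unfolding t_def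
    using q by (simp add: algebra_simps power2_eq_square power3_eq_cube)
  have l: "1 \<le> t"
  proof (rule ccontr)
    assume "\<not> 1 \<le> t"
    then have t1: "t < 1" by simp
    have tp: "t > 0" unfolding t_def using a by simp
    have "t * (alpha - 1) < 1 * (alpha - 1)" using t1 a by (intro mult_strict_right_mono) auto
    then have "alpha > 2" using e by simp
    then have "alpha * (alpha - 1) > 2 * 1" by (intro mult_strict_mono) auto
    then show False using t1 unfolding t_def by simp
  qed
  have "1 * (alpha - 1) \<le> t * (alpha - 1)" using l a by (intro mult_right_mono) auto
  then have a2: "alpha \<le> 2" using e by simp
  have u: "t \<le> alpha" unfolding t_def using a a2 by (simp add: mult_le_cancel_left1)
  show "1 \<le> wt w" using l a unfolding wt_def t_def by auto
  show "wt w \<le> alpha" using u a unfolding wt_def t_def by auto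
qed

lemma wt_step: "wt (False # w) + (if prefix [False, True] w then 0 else wt (True # w)) = alpha * wt w"
proof -
  have q: "alpha ^ 3 - 2 * alpha ^ 2 + alpha - 1 = 0" using alpha_props by simp
  show ?thesis
  proof (cases w)
    case Nil then show ?thesis by (simp add: wt_def algebra_simps power2_eq_square)
  next
    case (Cons x v)
    show ?thesis
    proof (cases x)
      case True
      then show ?thesis using Cons q
        by (simp add: wt_def algebra_simps power2_eq_square power3_eq_cube)
    next
      case False
      then show ?thesis using Cons
        by (cases v) (auto simp add: wt_def algebra_simps power2_eq_square)
    qed
  qed
qed

lemma sum_A: "(\<Sum>w\<in>A n. wt w) = alpha ^ (Suc n)"
proof (induction n)
  case 0
  have "A 0 = {[]}" unfolding A_def by auto
  then show ?case by (simp add: wt_def)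
next
  case (Suc n)
  let ?S = "{w \<in> A n. \<not> prefix [False, True] w}"
  have fS: "finite ?S" using finA by simp
  have "(\<Sum>w\<in>A (Suc n). wt w) = (\<Sum>w\<in>Cons False ` A n. wt w) + (\<Sum>w\<in>Cons True ` ?S. wt w)"
    unfolding A_Suc by (rule sum.union_disjoint) (auto simp: finA fS)
  also have "\<dots> = (\<Sum>w\<in>A n. wt (False # w)) + (\<Sum>w\<in>?S. wt (True # w))"
    by (simp add: sum.reindex)
  also have "(\<Sum>w\<in>?S. wt (True # w)) = (\<Sum>w\<in>A n. if prefix [False, True] w then 0 else wt (True # w))"
    by (simp add: sum.If_cases finA) (simp add: Collect_conj_eq[symmetric] Int_def)
  also have "(\<Sum>w\<in>A n. wt (False # w)) + \<dots> = (\<Sum>w\<in>A n. alpha * wt w)"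
    by (simp add: sum.distrib[symmetric] wt_step)
  also have "\<dots> = alpha ^ Suc (Suc n)" by (simp add: sum_distrib_left[symmetric] Suc)
  finally show ?case .
qed

lemma cardA: "alpha ^ n \<le> real (card (A n))" "real (card (A n)) \<le> alpha ^ Suc n"
proof -
  have a: "alpha > 1" using alpha_props by simp
  have "alpha ^ Suc n \<le> (\<Sum>w\<in>A n. alpha)" unfolding sum_A[symmetric]
    by (rule sum_mono) (rule wt_bounds)
  then have "alpha * alpha ^ n \<le> alpha * real (card (A n))" by (simp add: mult.commute)
  then show "alpha ^ n \<le> real (card (A n))" using a by simp
  have "(\<Sum>w\<in>A n. 1) \<le> (\<Sum>w\<in>A n. wt w)" by (rule sum_mono) (rule wt_bounds)
  then show "real (card (A n)) \<le> alpha ^ Suc n" by (simp add: sum_A)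
qed

lemma R_sub: "R n \<subseteq> A n" unfolding R_def A_def by auto

lemma R_lower: "card (A n) \<le> card (R (n + 4))"
proof -
  let ?f = "\<lambda>w. [False, False] @ w @ [False, False]"
  have "?f ` A n \<subseteq> R (n + 4)"
  proof
    fix v assume "v \<in> ?f ` A n"
    then obtain w where w: "w \<in> A n" "v = ?f w" by auto
    have "\<not> sublist [True, False, True] (w @ [False, False])"
    proof
      assume "sublist [True, False, True] (w @ [False, False])"
      then have "sublist (rev [True, False, True]) (rev (w @ [False, False]))"
        by (simp only: sublist_rev)
      then have "sublist [True, False, True] (False # False # rev w)" by simp
      then have "sublist [True, False, True] (rev w)" by (simp add: subF)
      then show False using w sublist_rev_right[of "[True, False, True]" w] by (simp add: A_def)
    qed
    then have "\<not> sublist [True, False, True] v" using w(2) by (simp add: subF)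
    moreover have "\<not> suffix [True, False] v" using w(2)
      by (auto simp: suffix_def)
    ultimately show "v \<in> R (n + 4)" using w unfolding R_def A_def by auto
  qed
  moreover have "inj_on ?f (A n)" by (rule inj_onI) simp
  ultimately show ?thesis
    by (metis card_image card_mono R_sub finA finite_subset)
qed

lemma R_nonempty: "card (R n) \<ge> 1"
proof -
  have "replicate n False \<in> R n" unfolding R_def
  proof (intro CollectI conjI)
    show "\<not> sublist [True, False, True] (replicate n False)"
      by (metis in_set_replicate list.set_intros(1) set_mono_sublist subsetD)
    show "\<not> suffix [True, False] (replicate n False)"
      by (metis in_set_replicate list.set_intros(1) set_mono_suffix subsetD)
    show "\<not> prefix [False, True] (replicate n False)"
      by (metis in_set_replicate list.set_intros(1) list.set_intros(2) set_mono_prefix subsetD)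
  qed simp
  moreover have "finite (R n)" using R_sub finA finite_subset by blast
  ultimately show ?thesis by (metis One_nat_def Suc_leI card_gt_0_iff empty_iff)
qed

theorem lemma8p1:
  shows "(\<exists>!x::real. x > 0 \<and> x ^ 4 - x ^ 3 - x ^ 2 - 1 = 0)
    \<and> (\<exists>c1 c2 :: real. c1 > 0 \<and> c2 > 0 \<and>
         (\<forall>n::nat. n \<ge> 2 \<longrightarrow>
            c1 * alpha ^ n \<le> real (card (R n)) \<and> real (card (R n)) \<le> c2 * alpha ^ n))"
proof (intro conjI alpha_ex)
  show "\<exists>c1 c2 :: real. c1 > 0 \<and> c2 > 0 \<and>
         (\<forall>n::nat. n \<ge> 2 \<longrightarrow>
            c1 * alpha ^ n \<le> real (card (R n)) \<and> real (card (R n)) \<le> c2 * alpha ^ n)"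
  proof (rule exI[of _ "1 / alpha ^ 4"], rule exI[of _ alpha], intro conjI allI impI)
  have a: "alpha > 1" using alpha_props by simp
  show "1 / alpha ^ 4 > 0" "alpha > 0" using a by auto
  fix n :: nat assume n: "n \<ge> 2"
  have fR: "finite (R n)" using R_sub finA finite_subset by blast
  have "real (card (R n)) \<le> real (card (A n))" using card_mono[OF finA R_sub] by simp
  also have "\<dots> \<le> alpha ^ Suc n" by (rule cardA)
  finally show "real (card (R n)) \<le> alpha * alpha ^ n" by simp
  show "1 / alpha ^ 4 * alpha ^ n \<le> real (card (R n))"
  proof (cases "n \<ge> 4")
    case True
    then obtain m where m: "n = m + 4" by (metis add.commute le_add_diff_inverse)
    have "1 / alpha ^ 4 * alpha ^ n = alpha ^ m" using a by (simp add: m power_add)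
    also have "\<dots> \<le> real (card (A m))" by (rule cardA)
    also have "\<dots> \<le> real (card (R n))" using R_lower[of m] m by simp
    finally show ?thesis .
  next
    case False
    have "alpha ^ n \<le> alpha ^ 4" using False a by (intro power_increasing) auto
    then have "1 / alpha ^ 4 * alpha ^ n \<le> 1" using a by (simp add: field_simps)
    also have "1 \<le> real (card (R n))" using R_nonempty[of n] by simp
    finally show ?thesis .
  qed
  qed
qed

end
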